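(* Let $\gamma\in(0,1)$ and $\mu\in(0,\infty)\setminus\{1\}$. Let $g_0:\mathbb{R}\to\mathbb{R}\cup\{-\infty\}$ satisfy $\sup g_0=\gamma$, and let $(p_n,s_n,g_n)_{n\ge1}$ be defined by the dynamics in the context. Then for all $n\ge1$: - $s_n=\sup\{\xi\in\mathbb{R}:\sup_{x\in\mathbb{R}}\Phi_\xi[g_{n-1}](x)\ge\gamma\}$; - $g_n=\pi\circ\Phi_{s_n}[g_{n-1}]$.
   Context: Let $\pi(x)=x$ if $x\ge0$ and $\pi(x)=-\infty$ otherwise (including $x=-\infty$). Write $x_+=\max(x,0)$ and use $\sup\emptyset=-\infty$. Define $\Phi_\xi[h](x)=1-\gamma-\mu(\xi-x)_++\sup_y(h(y)-|x-y|)$. The dynamics is defined for $n\ge1$ by: - $p_n(x)=\pi[1-\gamma+\sup_y(g_{n-1}(y)-\min(1,\mu)(x-y)_+)]$; - $s_n=\sup\{x:p_n(x)\ge\gamma\}$; - $g_n(x)=\pi[1-\gamma+\sup_y(g_{n-1}(y)-|x-y|-\mu(s_n-x)_+)]$. *)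

theory Defs
  imports "HOL-Library.Extended_Real"
begin

text \<open>Values in R \<union> {-\<infinity>} are modelled in ereal. pi x = x if x \<ge> 0, else -\<infinity>.\<close>
definition piE :: "ereal \<Rightarrow> ereal" where
  "piE x = (if x \<ge> 0 then x else -\<infinity>)"

definition Phi :: "real \<Rightarrow> real \<Rightarrow> ereal \<Rightarrow> (real \<Rightarrow> ereal) \<Rightarrow> real \<Rightarrow> ereal" where
  "Phi \<gamma> \<mu> \<xi> h x =
     ereal (1 - \<gamma>) - ereal \<mu> * max (\<xi> - ereal x) 0 + (SUP y. h y - ereal \<bar>x - y\<bar>)"

end

theory Submission imports Defs begin

lemma piE_ge: "0 < (\<gamma>::real) \<Longrightarrow> (ereal \<gamma> \<le> piE v) = (ereal \<gamma> \<le> v)"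
proof (cases "0 \<le> v")
  case True then show ?thesis by (simp add: piE_def)
next
  case False
  assume g: "0 < \<gamma>"
  have "v < 0" using False by simp
  also have "0 < ereal \<gamma>" using g by simp
  finally have "v < ereal \<gamma>" .
  then show ?thesis using False by (simp add: piE_def not_le)
qed

lemma piE_le: "piE v \<le> v"
  unfolding piE_def by auto

lemma e_add: "ereal c + (h - ereal d) = h + ereal (c - d)"
  by (cases h) auto

lemma e_max: "ereal a - ereal \<mu> * max (ereal \<xi> - ereal x) 0 = ereal (a - \<mu> * max (\<xi> - x) 0)"
  by (simp add: max_def zero_ereal_def)

lemma core:
  fixes h :: "real \<Rightarrow> ereal" and \<xi> a \<mu> :: real
  assumes "0 < \<mu>"
  shows "(SUP x. ereal a - ereal \<mu> * max (ereal \<xi> - ereal x) 0 + (SUP y. h y - ereal \<bar>x - y\<bar>))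
     = ereal a + (SUP y. h y - ereal (min 1 \<mu> * max (\<xi> - y) 0))"
proof -
  have L: "(SUP x. ereal a - ereal \<mu> * max (ereal \<xi> - ereal x) 0 + (SUP y. h y - ereal \<bar>x - y\<bar>))
     = (SUP x. SUP y. h y + ereal (a - \<mu> * max (\<xi> - x) 0 - \<bar>x - y\<bar>))"
  proof (rule SUP_cong[OF refl])
    fix x
    have "ereal a - ereal \<mu> * max (ereal \<xi> - ereal x) 0 + (SUP y. h y - ereal \<bar>x - y\<bar>)
       = ereal (a - \<mu> * max (\<xi> - x) 0) + (SUP y. h y - ereal \<bar>x - y\<bar>)"
      by (simp only: e_max)
    also have "\<dots> = (SUP y. ereal (a - \<mu> * max (\<xi> - x) 0) + (h y - ereal \<bar>x - y\<bar>))"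
      by (rule SUP_ereal_add_right[symmetric]) auto
    also have "\<dots> = (SUP y. h y + ereal (a - \<mu> * max (\<xi> - x) 0 - \<bar>x - y\<bar>))"
      by (simp only: e_add)
    finally show "ereal a - ereal \<mu> * max (ereal \<xi> - ereal x) 0 + (SUP y. h y - ereal \<bar>x - y\<bar>)
       = (SUP y. h y + ereal (a - \<mu> * max (\<xi> - x) 0 - \<bar>x - y\<bar>))" .
  qed
  have R: "ereal a + (SUP y. h y - ereal (min 1 \<mu> * max (\<xi> - y) 0))
     = (SUP y. h y + ereal (a - min 1 \<mu> * max (\<xi> - y) 0))"
    by (simp add: SUP_ereal_add_right[symmetric] e_add)
  have ineq: "a - \<mu> * max (\<xi> - x) 0 - \<bar>x - y\<bar> \<le> a - min 1 \<mu> * max (\<xi> - y) 0" for x y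
  proof -
    have "min 1 \<mu> * max (\<xi> - y) 0 \<le> \<mu> * max (\<xi> - x) 0 + \<bar>x - y\<bar>"
    proof (cases "x \<le> \<xi>")
      case True
      have "min 1 \<mu> * max (\<xi> - y) 0 \<le> min 1 \<mu> * (max (\<xi> - x) 0 + \<bar>x - y\<bar>)"
        using assms by (intro mult_left_mono) auto
      also have "\<dots> \<le> \<mu> * max (\<xi> - x) 0 + \<bar>x - y\<bar>"
      proof -
        have a1: "min 1 \<mu> * max (\<xi> - x) 0 \<le> \<mu> * max (\<xi> - x) 0"
          by (intro mult_right_mono) auto
        have a2: "min 1 \<mu> * \<bar>x - y\<bar> \<le> 1 * \<bar>x - y\<bar>"
          by (intro mult_right_mono) auto
        show ?thesis using a1 a2 by (simp add: distrib_left)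
      qed
      finally show ?thesis .
    next
      case False
      have b1: "max (\<xi> - y) 0 \<le> \<bar>x - y\<bar>" using False by auto
      have b2: "min 1 \<mu> * max (\<xi> - y) 0 \<le> 1 * \<bar>x - y\<bar>"
        using b1 assms by (intro mult_mono) auto
      have b3: "0 \<le> \<mu> * max (\<xi> - x) 0" using assms by auto
      have b4: "min 1 \<mu> * max (\<xi> - y) 0 \<le> \<bar>x - y\<bar>" using b2 by simp
      show ?thesis using b4 b3 by linarith
    qed
    then show ?thesis by simp
  qed
  have ex: "\<exists>x. a - \<mu> * max (\<xi> - x) 0 - \<bar>x - y\<bar> = a - min 1 \<mu> * max (\<xi> - y) 0" for y
  proof (cases "\<xi> \<le> y")
    case True then show ?thesis by (intro exI[of _ y]) auto
  next
    case False
    show ?thesis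
    proof (cases "\<mu> \<le> 1")
      case True then show ?thesis using False by (intro exI[of _ y]) auto
    next
      case F2: False then show ?thesis using False by (intro exI[of _ \<xi>]) auto
    qed
  qed
  have "(SUP x. SUP y. h y + ereal (a - \<mu> * max (\<xi> - x) 0 - \<bar>x - y\<bar>))
     = (SUP y. h y + ereal (a - min 1 \<mu> * max (\<xi> - y) 0))"
  proof (rule antisym)
    show "(SUP x. SUP y. h y + ereal (a - \<mu> * max (\<xi> - x) 0 - \<bar>x - y\<bar>))
     \<le> (SUP y. h y + ereal (a - min 1 \<mu> * max (\<xi> - y) 0))"
    proof (intro SUP_least)
      fix x y
      show "h y + ereal (a - \<mu> * max (\<xi> - x) 0 - \<bar>x - y\<bar>)
         \<le> (SUP y. h y + ereal (a - min 1 \<mu> * max (\<xi> - y) 0))"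
      proof (rule SUP_upper2[of y])
        have "ereal (a - \<mu> * max (\<xi> - x) 0 - \<bar>x - y\<bar>) \<le> ereal (a - min 1 \<mu> * max (\<xi> - y) 0)"
          using ineq[of x y] by simp
        then show "h y + ereal (a - \<mu> * max (\<xi> - x) 0 - \<bar>x - y\<bar>) \<le> h y + ereal (a - min 1 \<mu> * max (\<xi> - y) 0)"
          by (rule add_left_mono)
      qed simp
    qed
    show "(SUP y. h y + ereal (a - min 1 \<mu> * max (\<xi> - y) 0))
      \<le> (SUP x. SUP y. h y + ereal (a - \<mu> * max (\<xi> - x) 0 - \<bar>x - y\<bar>))"
    proof (rule SUP_least)
      fix y
      obtain x where xe: "a - \<mu> * max (\<xi> - x) 0 - \<bar>x - y\<bar> = a - min 1 \<mu> * max (\<xi> - y) 0"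
        using ex by blast
      have "h y + ereal (a - min 1 \<mu> * max (\<xi> - y) 0)
          = h y + ereal (a - \<mu> * max (\<xi> - x) 0 - \<bar>x - y\<bar>)" by (simp only: xe)
      also have "\<dots> \<le> (SUP y. h y + ereal (a - \<mu> * max (\<xi> - x) 0 - \<bar>x - y\<bar>))"
        by (rule SUP_upper) simp
      also have "\<dots> \<le> (SUP x. SUP y. h y + ereal (a - \<mu> * max (\<xi> - x) 0 - \<bar>x - y\<bar>))"
        by (rule SUP_upper) simp
      finally show "h y + ereal (a - min 1 \<mu> * max (\<xi> - y) 0)
        \<le> (SUP x. SUP y. h y + ereal (a - \<mu> * max (\<xi> - x) 0 - \<bar>x - y\<bar>))" .
    qed
  qed
  then show ?thesis using L R by simp
qed

theorem propositionS2p4: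
  fixes \<gamma> \<mu> :: real
    and p g :: "nat \<Rightarrow> real \<Rightarrow> ereal"
    and s :: "nat \<Rightarrow> ereal"
  assumes "0 < \<gamma>" "\<gamma> < 1" "0 < \<mu>" "\<mu> \<noteq> 1"
    and g0_fin: "\<And>x. g 0 x \<noteq> \<infinity>"
    and g0_sup: "(SUP x. g 0 x) = ereal \<gamma>"
    and p_def: "\<And>n x. n \<ge> 1 \<Longrightarrow>
       p n x = piE (ereal (1 - \<gamma>) + (SUP y. g (n - 1) y - ereal (min 1 \<mu> * max (x - y) 0)))"
    and s_def: "\<And>n. n \<ge> 1 \<Longrightarrow> s n = Sup {ereal x | x. p n x \<ge> ereal \<gamma>}"
    and g_def: "\<And>n x. n \<ge> 1 \<Longrightarrow>
       g n x = piE (ereal (1 - \<gamma>) +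
         (SUP y. g (n - 1) y - ereal \<bar>x - y\<bar> - ereal \<mu> * max (s n - ereal x) 0))"
    and "n \<ge> 1"
  shows "s n = Sup {ereal \<xi> | \<xi>. (SUP x. Phi \<gamma> \<mu> (ereal \<xi>) (g (n - 1)) x) \<ge> ereal \<gamma>}
       \<and> g n = (\<lambda>x. piE (Phi \<gamma> \<mu> (s n) (g (n - 1)) x))"
proof -
  have bnd: "\<exists>B. \<forall>y. g k y \<le> ereal B" for k
  proof (induction k)
    case 0
    have "g 0 y \<le> ereal \<gamma>" for y using g0_sup by (metis SUP_upper UNIV_I)
    then show ?case by blast
  next
    case (Suc k)
    then obtain B where B: "\<And>y. g k y \<le> ereal B" by blast
    have "g (Suc k) x \<le> ereal (1 - \<gamma> + B)" for x
    proof -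
      have "(SUP y. g k y - ereal \<bar>x - y\<bar> - ereal \<mu> * max (s (Suc k) - ereal x) 0) \<le> ereal B"
      proof (rule SUP_least)
        fix y
        have "g k y - ereal \<bar>x - y\<bar> \<le> g k y" by (cases "g k y") auto
        moreover have "0 \<le> ereal \<mu> * max (s (Suc k) - ereal x) 0"
          using assms(3) by (simp add: ereal_zero_le_0_iff)
        ultimately have "g k y - ereal \<bar>x - y\<bar> - ereal \<mu> * max (s (Suc k) - ereal x) 0 \<le> g k y"
          by (meson ereal_diff_le_self order_trans)
        then show "g k y - ereal \<bar>x - y\<bar> - ereal \<mu> * max (s (Suc k) - ereal x) 0 \<le> ereal B"
          using B order_trans by blast
      qed
      then have "ereal (1 - \<gamma>) + (SUP y. g k y - ereal \<bar>x - y\<bar> - ereal \<mu> * max (s (Suc k) - ereal x) 0)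
          \<le> ereal (1 - \<gamma>) + ereal B" by (rule add_left_mono)
      moreover have "g (Suc k) x \<le> ereal (1 - \<gamma>) +
          (SUP y. g k y - ereal \<bar>x - y\<bar> - ereal \<mu> * max (s (Suc k) - ereal x) 0)"
        using g_def[of "Suc k" x] piE_le by simp
      ultimately show ?thesis by simp
    qed
    then show ?case by blast
  qed
  define h where "h = g (n - 1)"
  obtain B where B: "\<And>y. h y \<le> ereal B" using bnd h_def by blast
  have part1: "{ereal x | x. p n x \<ge> ereal \<gamma>}
     = {ereal \<xi> | \<xi>. (SUP x. Phi \<gamma> \<mu> (ereal \<xi>) h x) \<ge> ereal \<gamma>}"
  proof -
    have "p n \<xi> \<ge> ereal \<gamma> \<longleftrightarrow> (SUP x. Phi \<gamma> \<mu> (ereal \<xi>) h x) \<ge> ereal \<gamma>" for \<xi>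
    proof -
      have e: "(SUP x. Phi \<gamma> \<mu> (ereal \<xi>) h x)
          = ereal (1 - \<gamma>) + (SUP y. h y - ereal (min 1 \<mu> * max (\<xi> - y) 0))"
        unfolding Phi_def by (rule core[OF assms(3)])
      have "p n \<xi> = piE (ereal (1 - \<gamma>) + (SUP y. h y - ereal (min 1 \<mu> * max (\<xi> - y) 0)))"
        using p_def[OF \<open>1 \<le> n\<close>] unfolding h_def .
      then show ?thesis by (simp only: e piE_ge[OF assms(1)])
    qed
    then show ?thesis by simp
  qed
  have part2: "g n x = piE (Phi \<gamma> \<mu> (s n) h x)" for x
  proof -
    have "ereal (1 - \<gamma>) + (SUP y. h y - ereal \<bar>x - y\<bar> - ereal \<mu> * max (s n - ereal x) 0)
        = Phi \<gamma> \<mu> (s n) h x"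
    proof (cases "s n")
      case (real \<sigma>)
      have m: "ereal \<mu> * max (s n - ereal x) 0 = ereal (\<mu> * max (\<sigma> - x) 0)"
        using real by (simp add: max_def zero_ereal_def)
      have "(SUP y. h y - ereal \<bar>x - y\<bar> - ereal (\<mu> * max (\<sigma> - x) 0))
          = (SUP y. h y - ereal \<bar>x - y\<bar>) - ereal (\<mu> * max (\<sigma> - x) 0)"
        by (rule SUP_ereal_minus_left) auto
      then show ?thesis unfolding Phi_def m
        by (cases "(SUP y. h y - ereal \<bar>x - y\<bar>)") auto
    next
      case PInf
      have m: "ereal \<mu> * max (s n - ereal x) 0 = \<infinity>"
        using PInf assms(3) by simp
      have t: "h y - ereal \<bar>x - y\<bar> - \<infinity> = -\<infinity>" for y
        using B[of y] by (cases "h y") auto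
      have A: "(SUP y. h y - ereal \<bar>x - y\<bar>) \<le> ereal B"
      proof (rule SUP_least)
        fix y
        have "h y - ereal \<bar>x - y\<bar> \<le> h y" by (cases "h y") auto
        then show "h y - ereal \<bar>x - y\<bar> \<le> ereal B" using B[of y] by (rule order_trans)
      qed
      have "ereal (1 - \<gamma>) - \<infinity> + (SUP y. h y - ereal \<bar>x - y\<bar>) = -\<infinity>"
        using A by (cases "(SUP y. h y - ereal \<bar>x - y\<bar>)") auto
      then show ?thesis unfolding Phi_def m t by simp
    next
      case MInf
      then show ?thesis unfolding Phi_def by (simp add: max_def)
    qed
    moreover have "g n x = piE (ereal (1 - \<gamma>) + (SUP y. h y - ereal \<bar>x - y\<bar> - ereal \<mu> * max (s n - ereal x) 0))"
      using g_def[OF \<open>1 \<le> n\<close>] unfolding h_def .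
    ultimately show ?thesis by simp
  qed
  show ?thesis unfolding h_def[symmetric] using part1 part2 s_def[OF \<open>1 \<le> n\<close>] by (simp add: fun_eq_iff)
qed

end
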